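(* Let $\mathfrak{M}$ be a non-quasianalytic weight matrix of R-moderate growth. Then the derived families satisfy $\mathfrak{S}\{\preceq\}\mathfrak{K}\{\preceq\}\underline{\mathfrak{L}}\{\preceq\}\mathfrak{L}$.
   Context: A weight sequence is $M=(M_k)_{k\ge0}$ with $M_k=\mu_0\cdots\mu_k$, $1=\mu_0\le\mu_1\le\cdots$, $\mu_k\to\infty$; non-quasianalytic if $\sum1/\mu_k<\infty$. A weight matrix $\mathfrak{M}=\{M^{(\alpha)}:\alpha>0\}$ is a family of weight sequences with $M^{(\alpha)}\le M^{(\beta)}$ for $\alpha\le\beta$; non-quasianalytic if all are; R-moderate growth: for each $M\in\mathfrak{M}$ there are $N\in\mathfrak{M}$, $C\ge1$ with $M_{j+k}\le C^{j+k}N_jN_k$. For positive sequences $M\preceq N$ means $\sup_{k\ge1}(M_k/N_k)^{1/k}<\infty$; for families, $\mathfrak{F}\{\preceq\}\mathfrak{G}$ means every $F\in\mathfrak{F}$ satisfies $F\preceq G$ for some $G\in\mathfrak{G}$. $\omega_M(t)=\sup_k\log(t^kM_0/M_k)$, $\widetilde\omega_M=\omega_M+\log(1+t^2)$, log-convex minorant $\underline P_k=P_0\sup_{t\ge0}t^ke^{-\omega_P(t)}$. $\kappa_\omega(t)=\int_1^\infty\omega(ts)s^{-2}ds$, $\varphi^*_\omega(x)=\sup_{y\ge0}(xy-\omega(e^y))$. Derived families: $K^{(\alpha)}_j=\exp(\varphi^*_{\kappa_\alpha}(j))$ with $\kappa_\alpha=\kappa_{\widetilde\omega_{M^{(\alpha)}}}$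 replaced by an equivalent normalized (vanishing on $[0,1]$) function, $\mathfrak{K}=\{K^{(\alpha)}\}$; $L^{(\alpha)}_0=1$, $L^{(\alpha)}_k=\min_{0\le j<k}(k/\sum_{\ell\ge k}(\mu^{(\alpha)}_\ell)^{-1})^{k-j}M^{(\alpha)}_j$, $\mathfrak{L}=\{L^{(\alpha)}\}$, $\underline{\mathfrak{L}}=\{\underline L^{(\alpha)}\}$; $S^{(\alpha)}_k=\sigma_0\cdots\sigma_k$ with $\sigma_0=1$, $\sigma_k=\tau_1k/\tau_k$, $\tau_k=k/\mu^{(\alpha)}_k+\sum_{\ell\ge k}1/\mu^{(\alpha)}_\ell$, $\mathfrak{S}=\{S^{(\alpha)}\}$. *)

theory Defs
  imports "HOL-Analysis.Analysis"
begin

definition weight_seq :: "(nat \<Rightarrow> real) \<Rightarrow> bool" where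
  "weight_seq M \<longleftrightarrow> (\<exists>\<mu>::nat \<Rightarrow> real. \<mu> 0 = 1 \<and> mono \<mu> \<and> filterlim \<mu> at_top sequentially
      \<and> (\<forall>k. M k = (\<Prod>j\<le>k. \<mu> j)))"

definition quot :: "(nat \<Rightarrow> real) \<Rightarrow> nat \<Rightarrow> real" where
  "quot M k = (if k = 0 then 1 else M k / M (k - 1))"

definition nonquasianalytic :: "(nat \<Rightarrow> real) \<Rightarrow> bool" where
  "nonquasianalytic M \<longleftrightarrow> weight_seq M \<and> summable (\<lambda>k. 1 / quot M k)"

definition weight_matrix :: "(real \<Rightarrow> nat \<Rightarrow> real) \<Rightarrow> bool" where
  "weight_matrix Mf \<longleftrightarrow> (\<forall>\<alpha>>0. weight_seq (Mf \<alpha>))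
     \<and> (\<forall>\<alpha> \<beta>. 0 < \<alpha> \<longrightarrow> \<alpha> \<le> \<beta> \<longrightarrow> (\<forall>k. Mf \<alpha> k \<le> Mf \<beta> k))"

definition nq_matrix :: "(real \<Rightarrow> nat \<Rightarrow> real) \<Rightarrow> bool" where
  "nq_matrix Mf \<longleftrightarrow> (\<forall>\<alpha>>0. nonquasianalytic (Mf \<alpha>))"

definition R_moderate :: "(real \<Rightarrow> nat \<Rightarrow> real) \<Rightarrow> bool" where
  "R_moderate Mf \<longleftrightarrow> (\<forall>\<alpha>>0. \<exists>\<beta>>0. \<exists>C\<ge>1. \<forall>j k.
      Mf \<alpha> (j + k) \<le> C ^ (j + k) * Mf \<beta> j * Mf \<beta> k)"

definition seq_preceq :: "(nat \<Rightarrow> real) \<Rightarrow> (nat \<Rightarrow> real) \<Rightarrow> bool" where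
  "seq_preceq M N \<longleftrightarrow> bdd_above ((\<lambda>k. root k (M k / N k)) ` {1..})"

definition fam_preceq :: "(real \<Rightarrow> nat \<Rightarrow> real) \<Rightarrow> (real \<Rightarrow> nat \<Rightarrow> real) \<Rightarrow> bool" where
  "fam_preceq F G \<longleftrightarrow> (\<forall>\<alpha>>0. \<exists>\<beta>>0. seq_preceq (F \<alpha>) (G \<beta>))"

definition omegaM :: "(nat \<Rightarrow> real) \<Rightarrow> real \<Rightarrow> real" where
  "omegaM M t = (if t \<le> 0 then 0 else (SUP k::nat. ln (t ^ k * M 0 / M k)))"

definition omega_tilde :: "(nat \<Rightarrow> real) \<Rightarrow> real \<Rightarrow> real" where
  "omega_tilde M t = omegaM M t + ln (1 + t\<^sup>2)"

definition lc_minorant :: "(nat \<Rightarrow> real) \<Rightarrow> nat \<Rightarrow> real" where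
  "lc_minorant P k = P 0 * (SUP t\<in>{0::real..}. t ^ k * exp (- omegaM P t))"

definition kappa :: "(real \<Rightarrow> real) \<Rightarrow> real \<Rightarrow> real" where
  "kappa \<omega> t = integral {1..} (\<lambda>s. \<omega> (t * s) / s\<^sup>2)"

text \<open>Normalized (vanishing on [0,1]) equivalent version of kappa: kappa is increasing,
  so subtracting the constant kappa 1 and cutting off at 1 gives an equivalent function.\<close>
definition kappa_norm :: "(real \<Rightarrow> real) \<Rightarrow> real \<Rightarrow> real" where
  "kappa_norm \<omega> t = (if t \<le> 1 then 0 else kappa \<omega> t - kappa \<omega> 1)"

definition phi_star :: "(real \<Rightarrow> real) \<Rightarrow> real \<Rightarrow> real" where
  "phi_star \<omega> x = (SUP y\<in>{0::real..}. x * y - \<omega> (exp y))"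

definition K_seq :: "(nat \<Rightarrow> real) \<Rightarrow> nat \<Rightarrow> real" where
  "K_seq M j = exp (phi_star (kappa_norm (omega_tilde M)) (real j))"

definition L_seq :: "(nat \<Rightarrow> real) \<Rightarrow> nat \<Rightarrow> real" where
  "L_seq M k = (if k = 0 then 1 else
     Min ((\<lambda>j. (real k / (\<Sum>l. 1 / quot M (l + k))) ^ (k - j) * M j) ` {..<k}))"

definition tau :: "(nat \<Rightarrow> real) \<Rightarrow> nat \<Rightarrow> real" where
  "tau M k = real k / quot M k + (\<Sum>l. 1 / quot M (l + k))"

definition sigma :: "(nat \<Rightarrow> real) \<Rightarrow> nat \<Rightarrow> real" where
  "sigma M k = (if k = 0 then 1 else tau M 1 * real k / tau M k)"

definition S_seq :: "(nat \<Rightarrow> real) \<Rightarrow> nat \<Rightarrow> real" where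
  "S_seq M k = (\<Prod>j\<le>k. sigma M j)"

end

theory Submission
  imports Defs "HOL-Real_Asymp.Real_Asymp"
begin
locale nqs =
  fixes M :: "nat \<Rightarrow> real"
  assumes nq: "nonquasianalytic M"
begin

abbreviation "q \<equiv> quot M"

lemma ws: "weight_seq M" using nq by (simp add: nonquasianalytic_def)

lemma summ: "summable (\<lambda>k. 1 / q k)" using nq by (simp add: nonquasianalytic_def)

lemma basics: "q 0 = 1 \<and> mono q \<and> filterlim q at_top sequentially \<and> M 0 = 1
   \<and> (\<forall>k. M (Suc k) = M k * q (Suc k)) \<and> (\<forall>k. 1 \<le> q k) \<and> (\<forall>k. 0 < M k)"
proof -
  from ws[unfolded weight_seq_def] obtain \<mu> where H: "\<mu> 0 = 1 \<and> mono \<mu> \<and> filterlim \<mu> at_top sequentially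
      \<and> (\<forall>k. M k = (\<Prod>j\<le>k. \<mu> j))" ..
  have m0: "\<mu> 0 = 1" and mm: "mono \<mu>" and ml: "filterlim \<mu> at_top sequentially"
    and Mk: "\<And>k. M k = (\<Prod>j\<le>k. \<mu> j)" using H by auto
  have ge1: "1 \<le> \<mu> k" for k using monoD[OF mm, of 0 k] m0 by simp
  have pos: "0 < M k" for k unfolding Mk using ge1 by (intro prod_pos) (smt (verit))
  have MS: "M (Suc k) = M k * \<mu> (Suc k)" for k unfolding Mk by simp
  have qe: "q k = \<mu> k" for k
  proof (cases k)
    case 0 then show ?thesis by (simp add: quot_def m0)
  next
    case (Suc j) then show ?thesis using MS[of j] pos[of j] by (simp add: quot_def)
  qed
  have qm: "q = \<mu>" by (rule ext) (rule qe)
  have M0: "M 0 = 1" using Mk[of 0] m0 by simp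
  have a1: "q 0 = 1" using m0 qm by simp
  have a2: "mono q" using mm qm by simp
  have a3: "filterlim q at_top sequentially" using ml qm by simp
  have a4: "\<forall>k. M (Suc k) = M k * q (Suc k)" using MS qm by simp
  have a5: "\<forall>k. 1 \<le> q k" using ge1 qm by simp
  have a6: "\<forall>k. 0 < M k" using pos by simp
  show ?thesis by (intro conjI a1 a2 a3 M0 a4 a5 a6)
qed

lemma q0[simp]: "q 0 = 1" using basics by (rule conjunct1)
lemma q_mono': "mono q" using basics[THEN conjunct2] by (rule conjunct1)
lemma q_mono: "i \<le> j \<Longrightarrow> q i \<le> q j" using q_mono' by (rule monoD)
lemma q_lim: "filterlim q at_top sequentially" using basics[THEN conjunct2, THEN conjunct2] by (rule conjunct1)
lemma M0[simp]: "M 0 = 1" using basics[THEN conjunct2, THEN conjunct2, THEN conjunct2] by (rule conjunct1)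
lemma MS: "M (Suc k) = M k * q (Suc k)"
  using basics[THEN conjunct2, THEN conjunct2, THEN conjunct2, THEN conjunct2, THEN conjunct1] by (rule spec)
lemma q_ge1: "1 \<le> q k"
  using basics[THEN conjunct2, THEN conjunct2, THEN conjunct2, THEN conjunct2, THEN conjunct2, THEN conjunct1] by (rule spec)
lemma M_pos: "0 < M k"
  using basics[THEN conjunct2, THEN conjunct2, THEN conjunct2, THEN conjunct2, THEN conjunct2, THEN conjunct2] by (rule spec)
lemma q_pos: "0 < q k" using q_ge1[of k] by linarith

lemma M_prod: "M k = (\<Prod>l<k. q (Suc l))"
  by (induction k) (simp_all add: MS)

lemma M_ge1: "1 \<le> M k"
proof (induction k)
  case (Suc k) then show ?case using MS[of k] q_ge1[of "Suc k"] by (metis mult_mono' mult_1 zero_le_one)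
qed simp

end

lemma omegaM_le:
  assumes "u > 0" "\<And>k. ln (u ^ k * P 0 / P k) \<le> B"
  shows "omegaM P u \<le> B"
  unfolding omegaM_def using assms by (auto intro!: cSUP_least)

lemma omegaM_ge:
  assumes "u > 0" "\<And>k. ln (u ^ k * P 0 / P k) \<le> B"
  shows "ln (u ^ k * P 0 / P k) \<le> omegaM P u"
  unfolding omegaM_def using assms by (auto intro!: cSUP_upper bdd_aboveI2)

context nqs
begin

definition Gam :: "real \<Rightarrow> nat" where "Gam u = (LEAST m. u < q (Suc m))"

lemma Gam_ex: "\<exists>m. u < q (Suc m)"
proof -
  have "eventually (\<lambda>n. u < q n) sequentially"
    using q_lim filterlim_at_top_dense by blast
  then obtain N where "\<forall>n\<ge>N. u < q n" unfolding eventually_sequentially by blast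
  then have "u < q (Suc N)" by simp
  then show ?thesis by blast
qed

lemma Gam1: "u < q (Suc (Gam u))"
  unfolding Gam_def using Gam_ex by (rule LeastI_ex)

lemma Gam2: "1 \<le> l \<Longrightarrow> l \<le> Gam u \<Longrightarrow> q l \<le> u"
proof -
  assume "1 \<le> l" "l \<le> Gam u"
  then obtain j where j: "l = Suc j" "j < Gam u" by (cases l) auto
  from j(2) have "\<not> u < q (Suc j)" unfolding Gam_def by (rule not_less_Least)
  then show ?thesis using j by simp
qed

lemma Gam3: "Gam u < l \<Longrightarrow> u < q l"
  using Gam1[of u] q_mono[of "Suc (Gam u)" l] by simp

definition Plog :: "real \<Rightarrow> nat \<Rightarrow> real" where
  "Plog u k = (\<Sum>l<k. ln (u / q (Suc l)))"

lemma ln_ratio: "u > 0 \<Longrightarrow> ln (u ^ k * M 0 / M k) = Plog u k"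
proof (induction k)
  case 0 then show ?case by (simp add: Plog_def)
next
  case (Suc k)
  have "u ^ Suc k * M 0 / M (Suc k) = (u ^ k * M 0 / M k) * (u / q (Suc k))"
    using M_pos[of k] q_pos[of "Suc k"] by (simp add: MS[of k] field_simps)
  also have "ln \<dots> = ln (u ^ k * M 0 / M k) + ln (u / q (Suc k))"
    using Suc.prems M_pos[of k] q_pos[of "Suc k"] by (intro ln_mult_pos) simp_all
  finally show ?case using Suc by (simp add: Plog_def)
qed

lemma Plog_le: assumes "u > 0" shows "Plog u k \<le> Plog u (Gam u)"
proof (cases "k \<le> Gam u")
  case True
  show ?thesis using True
  proof (induction rule: dec_induct)
    case (step n)
    have "q (Suc n) \<le> u" using Gam2[of "Suc n" u] step by simp
    then have "0 \<le> ln (u / q (Suc n))" using q_pos[of "Suc n"] by simp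
    then show ?case using step by (simp add: Plog_def)
  qed simp
next
  case False
  then have "Gam u \<le> k" by simp
  then show ?thesis
  proof (induction rule: dec_induct)
    case (step n)
    have "u < q (Suc n)" using Gam3[of u "Suc n"] step by simp
    then have "ln (u / q (Suc n)) \<le> 0" using q_pos[of "Suc n"] assms by simp
    then show ?case using step by (simp add: Plog_def)
  qed simp
qed

lemma omega_eq: "u > 0 \<Longrightarrow> omegaM M u = Plog u (Gam u)"
proof -
  assume u: "u > 0"
  have "omegaM M u = Sup (range (\<lambda>k. ln (u ^ k * M 0 / M k)))" using u by (simp add: omegaM_def)
  also have "range (\<lambda>k. ln (u ^ k * M 0 / M k)) = range (Plog u)"
    using ln_ratio[OF u] by presburger
  also have "Sup (range (Plog u)) = Plog u (Gam u)"
    by (rule cSup_eq_maximum) (auto simp del: M0 intro: Plog_le[OF u])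
  finally show ?thesis .
qed

lemma omega_ge: "u > 0 \<Longrightarrow> Plog u k \<le> omegaM M u"
  using omega_eq Plog_le by simp

lemma omega_nonneg: "0 \<le> omegaM M u"
proof (cases "u > 0")
  case True then show ?thesis using omega_ge[of u 0] by (simp add: Plog_def)
qed (simp add: omegaM_def)

lemma omega_small: "u \<le> 1 \<Longrightarrow> omegaM M u = 0"
proof (cases "u > 0")
  case True
  assume u1: "u \<le> 1"
  have "Plog u k \<le> 0" for k unfolding Plog_def
  proof (intro sum_nonpos)
    fix l
    have "u / q (Suc l) \<le> 1" using u1 q_ge1[of "Suc l"] q_pos[of "Suc l"] by (simp add: divide_le_eq_1)
    then show "ln (u / q (Suc l)) \<le> 0" using True q_pos[of "Suc l"] by simp
  qed
  then have "Plog u (Gam u) \<le> 0" by blast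
  then show ?thesis using omega_eq[OF True] omega_nonneg[of u] by simp
qed (simp add: omegaM_def)

definition T :: "nat \<Rightarrow> real" where "T k = (\<Sum>l. 1 / q (l + k))"

lemma summT: "summable (\<lambda>l. 1 / q (l + k))"
  using summable_ignore_initial_segment[OF summ] by simp

lemma T_split: "T k = (\<Sum>l<d. 1 / q (l + k)) + T (k + d)"
proof -
  have "T k = (\<Sum>l. 1 / q (l + d + k)) + (\<Sum>l<d. 1 / q (l + k))"
    unfolding T_def by (rule suminf_split_initial_segment[OF summT])
  then show ?thesis unfolding T_def by (simp add: add.assoc add.commute add.left_commute)
qed

lemma T_pos: "0 < T k"
  unfolding T_def by (rule suminf_pos[OF summT]) (simp add: q_pos)

lemma T_mono: "k \<le> k' \<Longrightarrow> T k' \<le> T k"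
proof -
  assume "k \<le> k'"
  have "0 \<le> (\<Sum>l<k' - k. 1 / q (l + k))" by (intro sum_nonneg) (simp add: q_pos less_imp_le)
  then show ?thesis using T_split[of k "k' - k"] \<open>k \<le> k'\<close> by simp
qed

end

definition Fp :: "real \<Rightarrow> real \<Rightarrow> real" where "Fp c r = - (ln (c * r) + 1) / r"

lemma Fp_deriv:
  assumes "c > 0" "x > 0"
  shows "(Fp c has_real_derivative ln (c * x) / x\<^sup>2) (at x)"
proof -
  have "((\<lambda>r. - (ln (c * r) + 1) / r) has_real_derivative
        ((- (c / (c * x))) * x - (- (ln (c * x) + 1)) * 1) / (x * x)) (at x)"
    using assms by (auto intro!: derivative_eq_intros)
  moreover have "((- (c / (c * x))) * x - (- (ln (c * x) + 1)) * 1) / (x * x) = ln (c * x) / x\<^sup>2"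
    using assms by (simp add: field_simps power2_eq_square)
  ultimately show ?thesis unfolding Fp_def by simp
qed

lemma ftc_piece:
  assumes c: "c > 0" and a: "1 / c \<le> a" "0 < a" "a \<le> y"
  shows "((\<lambda>r. max 0 (ln (c * r)) / r\<^sup>2) has_integral (Fp c y - Fp c a)) {a..y}"
proof -
  have eq: "max 0 (ln (c * r)) / r\<^sup>2 = ln (c * r) / r\<^sup>2" if "r \<in> {a..y}" for r
  proof -
    have "1 \<le> c * a" using a(1) c by (simp add: field_simps)
    moreover have "c * a \<le> c * r" using that c by (intro mult_left_mono) auto
    ultimately have "1 \<le> c * r" by linarith
    then show ?thesis by simp
  qed
  have "((\<lambda>r. ln (c * r) / r\<^sup>2) has_integral (Fp c y - Fp c a)) {a..y}"
  proof (rule fundamental_theorem_of_calculus[OF a(3)])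
    fix x assume "x \<in> {a..y}"
    then have "x > 0" using a by auto
    then show "(Fp c has_vector_derivative ln (c * x) / x\<^sup>2) (at x within {a..y})"
      using Fp_deriv[OF c] has_real_derivative_iff_has_vector_derivative
      by (metis has_field_derivative_at_within)
  qed
  moreover have "((\<lambda>r. max 0 (ln (c * r)) / r\<^sup>2) has_integral (Fp c y - Fp c a)) {a..y} =
     ((\<lambda>r. ln (c * r) / r\<^sup>2) has_integral (Fp c y - Fp c a)) {a..y}"
    by (rule has_integral_cong) (rule eq)
  ultimately show ?thesis by simp
qed

lemma Fp_lim: "c > 0 \<Longrightarrow> (Fp c \<longlongrightarrow> 0) at_top"
proof -
  assume c: "c > 0"
  have ev: "eventually (\<lambda>r. Fp c r = - (ln c + ln r + 1) / r) at_top"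
    using eventually_gt_at_top[of 0] by eventually_elim (simp add: Fp_def ln_mult_pos c)
  have lim: "((\<lambda>r. - (ln c + ln r + 1) / r) \<longlongrightarrow> 0) at_top"
    by real_asymp
  show ?thesis by (subst tendsto_cong[OF ev]) (rule lim)
qed

lemma piece_cont: "(c::real) > 0 \<Longrightarrow> continuous_on {1..y} (\<lambda>r. max 0 (ln (c * r)) / r\<^sup>2)"
  by (intro continuous_intros) auto

lemma piece:
  assumes c: "(c::real) > 0"
  shows "((\<lambda>r. max 0 (ln (c * r)) / r\<^sup>2) has_integral (if 1 \<le> c then ln c + 1 else c)) {1..}"
proof -
  define h where "h = (\<lambda>r::real. max (0::real) (ln (c * r)) / r\<^sup>2)"
  define a where "a = max 1 (1 / c)"
  have a1: "1 \<le> a" "1 / c \<le> a" "0 < a" unfolding a_def by auto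
  have int: "h integrable_on {1..y}" for y
    unfolding h_def using piece_cont[OF c] by (rule integrable_continuous_interval)
  have I: "integral {1..y} h = Fp c y - Fp c a" if y: "a \<le> y" for y
  proof (cases "1 \<le> c")
    case True
    then have "a = 1" unfolding a_def by (simp add: field_simps)
    then show ?thesis using ftc_piece[OF c a1(2) a1(3) y] unfolding h_def
      by (simp add: integral_unique)
  next
    case False
    then have aa: "a = 1 / c" unfolding a_def using c by (simp add: field_simps)
    have "integral {1..a} h + integral {a..y} h = integral {1..y} h"
      by (rule Henstock_Kurzweil_Integration.integral_combine) (use a1 y int in auto)
    moreover have "integral {a..y} h = Fp c y - Fp c a"
      using ftc_piece[OF c a1(2) a1(3) y] unfolding h_def by (simp add: integral_unique)
    moreover have "integral {1..a} h = integral {1..a} (\<lambda>r. 0)"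
    proof (rule integral_cong)
      fix r assume r: "r \<in> {1..a}"
      then have "c * r \<le> 1" using c aa by (simp add: field_simps)
      moreover have "0 < c * r" using r c by simp
      ultimately have "ln (c * r) \<le> 0" by simp
      then show "h r = 0" unfolding h_def by simp
    qed
    ultimately show ?thesis by simp
  qed
  have lim: "((\<lambda>y. integral {1..y} h) \<longlongrightarrow> 0 - Fp c a) at_top"
  proof -
    have ev: "eventually (\<lambda>y. integral {1..y} h = Fp c y - Fp c a) at_top"
      using eventually_ge_at_top[of a] by eventually_elim (rule I)
    have "((\<lambda>y. Fp c y - Fp c a) \<longlongrightarrow> 0 - Fp c a) at_top"
      by (intro tendsto_intros Fp_lim c)
    then show ?thesis by (subst tendsto_cong[OF ev])
  qed
  have "(h has_integral (0 - Fp c a)) {1..}"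
    by (rule has_integral_to_inf[OF int lim]) (simp add: h_def)
  moreover have "0 - Fp c a = (if 1 \<le> c then ln c + 1 else c)"
  proof (cases "1 \<le> c")
    case True
    then have "a = 1" unfolding a_def by (simp add: field_simps)
    then show ?thesis using True by (simp add: Fp_def)
  next
    case False
    then have aa: "a = 1 / c" unfolding a_def using c by (simp add: field_simps)
    then show ?thesis using False c by (simp add: Fp_def)
  qed
  ultimately show ?thesis unfolding h_def by simp
qed

context nqs
begin

definition g :: "real \<Rightarrow> nat \<Rightarrow> real" where
  "g t l = (if 1 \<le> t / q l then ln (t / q l) + 1 else t / q l)"

definition G :: "real \<Rightarrow> real" where "G t = (\<Sum>l. g t (Suc l))"

lemma g_tail: "t > 0 \<Longrightarrow> Gam t < l \<Longrightarrow> g t l = t / q l"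
  using Gam3[of t l] q_pos[of l] by (simp add: g_def)

lemma g_head: "1 \<le> l \<Longrightarrow> l \<le> Gam t \<Longrightarrow> g t l = ln (t / q l) + 1"
  using Gam2[of l t] q_pos[of l] by (simp add: g_def)

lemma g_nonneg: "t > 0 \<Longrightarrow> 0 \<le> g t l"
  using q_pos[of l] by (auto simp: g_def)

lemma summ_g: assumes t: "t > 0" shows "summable (\<lambda>l. g t (Suc l))"
proof (rule summable_comparison_test')
  show "summable (\<lambda>n. t * (1 / q (Suc n)))"
    using summ by (subst summable_Suc_iff) (rule summable_mult)
  fix n assume "Gam t \<le> n"
  then have "g t (Suc n) = t / q (Suc n)" using g_tail[OF t] by simp
  then show "norm (g t (Suc n)) \<le> t * (1 / q (Suc n))" using t q_pos[of "Suc n"] by simp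
qed

lemma sum_max: assumes u: "u > 0" and N: "Gam u \<le> N"
  shows "(\<Sum>l<N. max 0 (ln (u / q (Suc l)))) = Plog u (Gam u)"
  using N
proof (induction rule: dec_induct)
  case base
  show ?case unfolding Plog_def
  proof (rule sum.cong)
    fix l assume "l \<in> {..<Gam u}"
    then have "q (Suc l) \<le> u" using Gam2[of "Suc l" u] by simp
    then have "0 \<le> ln (u / q (Suc l))" using q_pos[of "Suc l"] u by simp
    then show "max 0 (ln (u / q (Suc l))) = ln (u / q (Suc l))" by simp
  qed simp
next
  case (step n)
  have "u < q (Suc n)" using Gam3[of u "Suc n"] step by simp
  then have "ln (u / q (Suc n)) \<le> 0" using q_pos[of "Suc n"] u by simp
  then show ?case using step by simp
qed

lemma kappa_series:
  assumes t: "t > 0"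
  shows "((\<lambda>r. omegaM M (t * r) / r\<^sup>2) has_integral G t) {1..}"
proof -
  define f where "f = (\<lambda>N r. (\<Sum>l<N. max 0 (ln (t / q (Suc l) * r)) / r\<^sup>2))"
  have fi: "(f N has_integral (\<Sum>l<N. g t (Suc l))) {1..}" for N
    unfolding f_def
  proof (rule has_integral_sum)
    fix l assume "l \<in> {..<N}"
    have c: "t / q (Suc l) > 0" using t q_pos[of "Suc l"] by simp
    show "((\<lambda>r. max 0 (ln (t / q (Suc l) * r)) / r\<^sup>2) has_integral g t (Suc l)) {1..}"
      using piece[OF c] by (simp add: g_def)
  qed simp
  have fm: "f N r \<le> f (Suc N) r" for N r
    unfolding f_def by (simp add: divide_nonneg_pos)
  have fl: "(\<lambda>N. f N r) \<longlonglongrightarrow> omegaM M (t * r) / r\<^sup>2" if r: "r \<in> {1..}" for r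
  proof -
    have r0: "r > 0" using r by simp
    have tr: "t * r > 0" using t r0 by simp
    have "eventually (\<lambda>N. f N r = omegaM M (t * r) / r\<^sup>2) sequentially"
      unfolding eventually_sequentially
    proof (intro exI allI impI)
      fix N assume N: "Gam (t * r) \<le> N"
      have "f N r = (\<Sum>l<N. max 0 (ln (t * r / q (Suc l)))) / r\<^sup>2"
        unfolding f_def sum_divide_distrib by (simp add: mult.commute mult.left_commute)
      also have "\<dots> = omegaM M (t * r) / r\<^sup>2"
        using sum_max[OF tr N] omega_eq[OF tr] by simp
      finally show "f N r = omegaM M (t * r) / r\<^sup>2" .
    qed
    then show ?thesis by (rule tendsto_eventually)
  qed
  have lim: "(\<lambda>N. \<Sum>l<N. g t (Suc l)) \<longlonglongrightarrow> G t"
    unfolding G_def by (rule summable_LIMSEQ[OF summ_g[OF t]])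
  show ?thesis
    by (rule has_integral_monotone_convergence_increasing[of f _ "{1..}", OF fi _ fl lim]) (rule fm)
qed

lemma G_formula: assumes t: "t > 0"
  shows "G t = Plog t (Gam t) + real (Gam t) + t * T (Suc (Gam t))"
proof -
  let ?m = "Gam t"
  have "G t = (\<Sum>n. g t (Suc (n + ?m))) + (\<Sum>i<?m. g t (Suc i))"
    unfolding G_def using suminf_split_initial_segment[OF summ_g[OF t], of ?m] by simp
  also have "(\<Sum>i<?m. g t (Suc i)) = (\<Sum>i<?m. ln (t / q (Suc i)) + 1)"
    by (rule sum.cong) (auto intro: g_head)
  also have "\<dots> = Plog t ?m + real ?m" by (simp add: Plog_def sum.distrib)
  also have "(\<lambda>n. g t (Suc (n + ?m))) = (\<lambda>n. t * (1 / q (n + Suc ?m)))"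
    using g_tail[OF t] by (intro ext) simp
  also have "(\<Sum>n. t * (1 / q (n + Suc ?m))) = t * T (Suc ?m)"
    unfolding T_def by (rule suminf_mult[OF summT])
  finally show ?thesis by simp
qed

lemma G_ge: "t > 0 \<Longrightarrow> omegaM M t + real (Gam t) + t * T (Suc (Gam t)) = G t"
  using G_formula omega_eq by simp

lemma G_ge_omega: "t > 0 \<Longrightarrow> omegaM M t \<le> G t"
  using G_ge[of t] T_pos[of "Suc (Gam t)"] by (smt (verit) of_nat_0_le_iff mult_pos_pos)

end

lemma inv_sq: "((\<lambda>s::real. 1 / s\<^sup>2) has_integral 1) {1..}"
  using has_integral_inverse_power_to_inf[of 2 1] by simp

lemma aux_ln: assumes "(x::real) > 0" "0 \<le> a" "a \<le> b"
  shows "a * ln x \<le> max 0 (b * (x - 1))"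
proof (cases "ln x \<le> 0")
  case True
  then have "a * ln x \<le> 0" using assms by (simp add: mult_nonneg_nonpos)
  then show ?thesis by simp
next
  case False
  then have "a * ln x \<le> b * ln x" using assms by (intro mult_right_mono) auto
  also have "\<dots> \<le> b * (x - 1)" using assms ln_le_minus_one[of x] by (intro mult_left_mono) auto
  finally show ?thesis by simp
qed

context nqs
begin

lemma lnbound: assumes u: "u > 0" shows "ln (1 + u\<^sup>2) \<le> omegaM M u + ln (2 * M 2)"
proof (cases "u \<le> 1")
  case True
  have "u\<^sup>2 \<le> 1" using True u by (simp add: power_le_one)
  then have "ln (1 + u\<^sup>2) \<le> ln 2" by (subst ln_le_cancel_iff) (auto simp: add_pos_nonneg)
  also have "\<dots> \<le> ln (2 * M 2)" using M_ge1[of 2] by simp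
  finally show ?thesis using omega_nonneg[of u] by simp
next
  case False
  have "1 + u\<^sup>2 \<le> 2 * u\<^sup>2" using False by (simp add: power2_eq_square) (smt (verit) mult_le_cancel_right1)
  then have "ln (1 + u\<^sup>2) \<le> ln (2 * u\<^sup>2)" using u by simp
  also have "\<dots> = ln 2 + 2 * ln u" using u by (simp add: ln_mult_pos ln_realpow)
  also have "2 * ln u = ln (u ^ 2 * M 0 / M 2) + ln (M 2)"
    using u M_pos[of 2] by (simp add: ln_mult_pos ln_divide_pos ln_realpow)
  also have "ln (u ^ 2 * M 0 / M 2) \<le> omegaM M u"
    using omega_ge[OF u, of 2] ln_ratio[OF u, of 2] by simp
  finally show ?thesis using M_pos[of 2] by (simp add: ln_mult_pos)
qed

lemma lnpart_int: assumes t: "(t::real) > 0" shows "(\<lambda>s. ln (1 + (t * s)\<^sup>2) / s\<^sup>2) integrable_on {1..}"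
proof (rule measurable_bounded_by_integrable_imp_integrable)
  let ?c = "ln (2 * M 2)"
  show "(\<lambda>s. ln (1 + (t * s)\<^sup>2) / s\<^sup>2) \<in> borel_measurable (lebesgue_on {1..})"
  proof (rule continuous_imp_measurable_on_sets_lebesgue)
    show "continuous_on {1..} (\<lambda>s. ln (1 + (t * s)\<^sup>2) / s\<^sup>2)"
      apply (intro continuous_intros) apply auto by (smt (verit) zero_le_power2)
  qed simp
  have "((\<lambda>s. omegaM M (t * s) / s\<^sup>2 + ?c * (1 / s\<^sup>2)) has_integral (G t + ?c * 1)) {1..}"
    by (intro has_integral_add kappa_series t has_integral_mult_right inv_sq)
  then show "(\<lambda>s. omegaM M (t * s) / s\<^sup>2 + ?c * (1 / s\<^sup>2)) integrable_on {1..}" by blast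
  fix s :: real assume s: "s \<in> {1..}"
  then have ts: "t * s > 0" using t by simp
  have "0 \<le> ln (1 + (t * s)\<^sup>2)" by simp
  then have "norm (ln (1 + (t * s)\<^sup>2) / s\<^sup>2) = ln (1 + (t * s)\<^sup>2) / s\<^sup>2" by simp
  also have "\<dots> \<le> (omegaM M (t * s) + ?c) / s\<^sup>2"
    using lnbound[OF ts] s by (intro divide_right_mono) auto
  finally show "norm (ln (1 + (t * s)\<^sup>2) / s\<^sup>2) \<le> omegaM M (t * s) / s\<^sup>2 + ?c * (1 / s\<^sup>2)"
    by (simp add: add_divide_distrib)
qed simp

definition Ip :: "real \<Rightarrow> real" where "Ip t = integral {1..} (\<lambda>s::real. ln (1 + (t * s)\<^sup>2) / s\<^sup>2)"

lemma Ip_nonneg: "t > 0 \<Longrightarrow> 0 \<le> Ip t"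
  unfolding Ip_def by (rule integral_nonneg[OF lnpart_int]) auto

lemma kt_has: assumes t: "t > 0"
  shows "((\<lambda>s. omega_tilde M (t * s) / s\<^sup>2) has_integral (G t + Ip t)) {1..}"
proof -
  have "((\<lambda>s. omegaM M (t * s) / s\<^sup>2 + ln (1 + (t * s)\<^sup>2) / s\<^sup>2) has_integral (G t + Ip t)) {1..}"
    unfolding Ip_def by (intro has_integral_add kappa_series t integrable_integral lnpart_int)
  then show ?thesis by (simp add: omega_tilde_def add_divide_distrib)
qed

lemma kappa_eq: "t > 0 \<Longrightarrow> kappa (omega_tilde M) t = G t + Ip t"
  unfolding kappa_def using kt_has by (rule integral_unique)

lemma G_nonneg: "t > 0 \<Longrightarrow> 0 \<le> G t"
  using G_ge_omega omega_nonneg by (meson order_trans)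

lemma kappa_ge: "t > 0 \<Longrightarrow> G t \<le> kappa (omega_tilde M) t"
  using kappa_eq Ip_nonneg by simp

lemma kappa_nonneg: "t > 0 \<Longrightarrow> 0 \<le> kappa (omega_tilde M) t"
  using kappa_ge G_nonneg by (meson order_trans)

end

context nqs
begin

abbreviation "L \<equiv> L_seq M"

lemma L0[simp]: "L 0 = 1" by (simp add: L_seq_def)

lemma L_char: assumes n: "1 \<le> n"
  shows "\<exists>j<n. L n = (real n / T n) ^ (n - j) * M j"
    and "\<And>i. i < n \<Longrightarrow> L n \<le> (real n / T n) ^ (n - i) * M i"
proof -
  let ?f = "\<lambda>j. (real n / T n) ^ (n - j) * M j"
  have Ln: "L n = Min (?f ` {..<n})" using n unfolding L_seq_def T_def by simp
  have "?f 0 \<in> ?f ` {..<n}" using n by (intro imageI) simp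
  then have ne: "?f ` {..<n} \<noteq> {}" by blast
  have "Min (?f ` {..<n}) \<in> ?f ` {..<n}" using ne by (intro Min_in) auto
  then show "\<exists>j<n. L n = ?f j" unfolding Ln by auto
  fix i assume "i < n"
  then show "L n \<le> ?f i" unfolding Ln by (intro Min_le) auto
qed

lemma lam_pos: "0 < real n / T n \<longleftrightarrow> 1 \<le> n"
  using T_pos[of n] by (auto simp: zero_less_divide_iff)

lemma L_pos: "0 < L n"
proof (cases "n = 0")
  case False
  then have n: "1 \<le> n" by simp
  obtain j where "j < n" "L n = (real n / T n) ^ (n - j) * M j" using L_char(1)[OF n] by blast
  then show ?thesis using lam_pos[of n] n M_pos[of j] by simp
qed simp

lemma Plog_step: "Plog u (Suc k) = Plog u k + ln (u / q (Suc k))"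
  by (simp add: Plog_def)

lemma L_bound: assumes t: "t > 0" shows "ln (t ^ n * L 0 / L n) \<le> G t"
proof (cases "n = 0")
  case True
  then show ?thesis using G_nonneg[OF t] by simp
next
  case False
  then have n: "1 \<le> n" by simp
  define lam where "lam = real n / T n"
  have lam: "0 < lam" unfolding lam_def using lam_pos n by simp
  obtain j where j: "j < n" "L n = lam ^ (n - j) * M j" using L_char(1)[OF n] unfolding lam_def by blast
  define m where "m = Gam t"
  have Gf: "G t = Plog t m + real m + t * T (Suc m)" unfolding m_def by (rule G_formula[OF t])
  have tT: "0 \<le> t * T (Suc m)" using t T_pos[of "Suc m"] by simp
  have pe: "t ^ n * L 0 / L n = (t ^ j * M 0 / M j) * (t / lam) ^ (n - j)"
    using j lam M_pos[of j] t by (simp add: field_simps power_add[symmetric] power_divide)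
  have X: "0 < t ^ j * M 0 / M j" using M_pos[of j] t by simp
  have Y: "0 < (t / lam) ^ (n - j)" using t lam by simp
  have "ln (t ^ n * L 0 / L n) = ln ((t ^ j * M 0 / M j) * (t / lam) ^ (n - j))"
    by (simp only: pe)
  also have "\<dots> = ln (t ^ j * M 0 / M j) + ln ((t / lam) ^ (n - j))"
    by (rule ln_mult_pos[OF X Y])
  also have "\<dots> = Plog t j + real (n - j) * ln (t / lam)"
    using ln_ratio[OF t, of j] by (simp add: ln_realpow del: M0)
  finally have eq: "ln (t ^ n * L 0 / L n) = Plog t j + real (n - j) * ln (t / lam)" .
  show ?thesis
  proof (cases "m < n")
    case True
    have h1: "Plog t j \<le> Plog t m" unfolding m_def by (rule Plog_le[OF t])
    have h2: "real (n - j) * ln (t / lam) \<le> max 0 (real n * (t / lam - 1))"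
      using t lam j by (intro aux_ln) auto
    have "real n * (t / lam - 1) = t * T n - real n"
      unfolding lam_def using n T_pos[of n] by (simp add: field_simps)
    also have "\<dots> \<le> t * T (Suc m)"
    proof -
      have "t * T n \<le> t * T (Suc m)" using T_mono[of "Suc m" n] True t by (intro mult_left_mono) auto
      then show ?thesis by simp
    qed
    finally have mx: "max 0 (real n * (t / lam - 1)) \<le> t * T (Suc m)" using tT by simp
    have "real (n - j) * ln (t / lam) \<le> t * T (Suc m)" using h2 mx by (rule order_trans)
    then show ?thesis unfolding eq Gf using h1 by simp
  next
    case False
    then have nm: "n \<le> m" by simp
    have qn: "q n \<le> t" using Gam2[of n t] n nm unfolding m_def by simp
    have h3: "Plog t j + real (k - j) * ln (t / q n) \<le> Plog t k" if "j \<le> k" "k \<le> n" for k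
      using that
    proof (induction k rule: dec_induct)
      case base then show ?case by simp
    next
      case (step k)
      have "q (Suc k) \<le> q n" using step by (intro q_mono) simp
      then have "ln (t / q n) \<le> ln (t / q (Suc k))"
        using t q_pos[of n] q_pos[of "Suc k"] by (simp add: divide_left_mono)
      moreover have "real (Suc k - j) = real (k - j) + 1" using step by simp
      ultimately show ?case using step by (simp add: Plog_step algebra_simps)
    qed
    have h4: "Plog t n \<le> Plog t m" unfolding m_def by (rule Plog_le[OF t])
    have "ln (t / lam) - ln (t / q n) = ln (q n / lam)"
      using t lam q_pos[of n] by (simp add: ln_divide_pos)
    have "Plog t j + real (n - j) * ln (t / lam) \<le> Plog t m + real (n - j) * ln (q n / lam)"
      using h3[of n] h4 j \<open>ln (t / lam) - ln (t / q n) = ln (q n / lam)\<close>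
      by (simp add: algebra_simps)
    also have "real (n - j) * ln (q n / lam) \<le> max 0 (real n * (q n / lam - 1))"
      using q_pos[of n] lam j by (intro aux_ln) auto
    also have "real n * (q n / lam - 1) = q n * T n - real n"
      unfolding lam_def using n T_pos[of n] by (simp add: field_simps)
    also have "q n * T n \<le> real (Suc m - n) + t * T (Suc m)"
    proof -
      have sp: "T n = (\<Sum>l<Suc m - n. 1 / q (l + n)) + T (Suc m)"
        using T_split[of n "Suc m - n"] nm by simp
      have "q n * (\<Sum>l<Suc m - n. 1 / q (l + n)) \<le> (\<Sum>l<Suc m - n. 1)"
        unfolding sum_distrib_left
      proof (rule sum_mono)
        fix l
        have "q n \<le> q (l + n)" by (rule q_mono) simp
        then show "q n * (1 / q (l + n)) \<le> 1" using q_pos[of "l + n"] by simp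
      qed
      moreover have "q n * T (Suc m) \<le> t * T (Suc m)"
        using qn T_pos[of "Suc m"] by (simp add: mult_right_mono)
      ultimately show ?thesis unfolding sp by (simp add: distrib_left)
    qed
    then have "max 0 (q n * T n - real n) \<le> real m + t * T (Suc m)"
      using n nm tT by simp
    finally show ?thesis unfolding eq Gf by simp
  qed
qed

end

lemma root_bound:
  assumes k: "1 \<le> k" and x: "x \<le> A ^ k * E" and A: "0 \<le> A" and E: "1 \<le> E"
  shows "root k x \<le> A * E"
proof -
  have "root k x \<le> root k (A ^ k * E)" using k x by simp
  also have "\<dots> = A * root k E" using k A by (simp add: real_root_mult real_root_power_cancel)
  also have "root k E \<le> root 1 E" using k E by (intro real_root_decreasing) auto
  then have "A * root k E \<le> A * E" using A by (simp add: mult_left_mono)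
  finally show ?thesis .
qed

lemma seq_preceqI:
  assumes "\<And>k. 1 \<le> k \<Longrightarrow> 0 < N k \<and> X k \<le> A ^ k * E * N k" "0 \<le> A" "1 \<le> E"
  shows "seq_preceq X N"
  unfolding seq_preceq_def
proof (rule bdd_aboveI2)
  fix k :: nat assume "k \<in> {1..}"
  then have k: "1 \<le> k" by simp
  then have "X k / N k \<le> A ^ k * E" using assms(1)[OF k] by (simp add: divide_le_eq)
  then show "root k (X k / N k) \<le> A * E" using root_bound[OF k _ assms(2,3)] by blast
qed

context nqs
begin

lemma omegaL_le: "t > 0 \<Longrightarrow> omegaM L t \<le> G t"
  using L_bound by (intro omegaM_le) auto

lemma omegaL_ge: "t > 0 \<Longrightarrow> ln (t ^ n * L 0 / L n) \<le> omegaM L t"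
  using L_bound by (intro omegaM_ge) auto

lemma lc_term_le: assumes t: "0 \<le> t" shows "t ^ n * exp (- omegaM L t) \<le> L n"
proof (cases "t = 0")
  case True
  then show ?thesis using L_pos[of n] by (cases n) (auto simp: omegaM_def)
next
  case False
  then have t: "t > 0" using t by simp
  have p: "0 < t ^ n / L n" using t L_pos[of n] by simp
  have "ln (t ^ n / L n) \<le> omegaM L t" using omegaL_ge[OF t, of n] by simp
  then have "t ^ n / L n \<le> exp (omegaM L t)" using p by (metis exp_le_cancel_iff exp_ln)
  then show ?thesis using L_pos[of n] by (simp add: divide_le_eq exp_minus field_simps)
qed

lemma lc_bdd: "bdd_above ((\<lambda>t. t ^ n * exp (- omegaM L t)) ` {0..})"
  using lc_term_le by (intro bdd_aboveI2) auto

lemma lc_le: "lc_minorant L n \<le> L n"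
  unfolding lc_minorant_def using lc_term_le by (simp, intro cSUP_least) auto

lemma lc_ge: "0 \<le> t \<Longrightarrow> t ^ n * exp (- omegaM L t) \<le> lc_minorant L n"
  unfolding lc_minorant_def using lc_bdd by (simp, intro cSUP_upper) auto

lemma lc_pos: "0 < lc_minorant L n"
proof -
  have a: "1 ^ n * exp (- omegaM L 1) \<le> lc_minorant L n" by (rule lc_ge) simp
  have "0 < (1::real) ^ n * exp (- omegaM L 1)" by simp
  then show ?thesis using a by linarith
qed

theorem part3: "seq_preceq (lc_minorant L) L"
  by (rule seq_preceqI[where A=1 and E=1]) (use L_pos lc_le in auto)

abbreviation "kap \<equiv> kappa (omega_tilde M)"
abbreviation "kn \<equiv> kappa_norm (omega_tilde M)"

lemma kn_ge: assumes t: "1 \<le> t" shows "omegaM L t - kap 1 \<le> kn t"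
proof (cases "t \<le> 1")
  case True
  then have "t = 1" using t by simp
  then show ?thesis using omegaL_le[of 1] kappa_ge[of 1] by (simp add: kappa_norm_def)
next
  case False
  then show ?thesis using omegaL_le[of t] kappa_ge[of t] by (simp add: kappa_norm_def)
qed

lemma kn_le: assumes t: "1 \<le> t" shows "kn t \<le> kap t"
  using kappa_nonneg[of 1] kappa_nonneg[of t] t by (simp add: kappa_norm_def)

lemma phi_term_le: assumes y: "0 \<le> y"
  shows "real j * y - kn (exp y) \<le> ln (M j) + kap 1"
proof -
  have t: "exp y > 0" "1 \<le> exp y" using y by auto
  have "real j * y - ln (M j) = ln (exp y ^ j * M 0 / M j)"
    using M_pos[of j] by (simp add: ln_div ln_realpow)
  also have "\<dots> \<le> omegaM M (exp y)" using omega_ge[OF t(1), of j] ln_ratio[OF t(1), of j] by simp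
  also have "\<dots> \<le> G (exp y)" using G_ge_omega[OF t(1)] .
  also have "\<dots> \<le> kap (exp y)" using kappa_ge[OF t(1)] .
  finally have a: "real j * y - ln (M j) \<le> kap (exp y)" .
  show ?thesis
  proof (cases "exp y \<le> 1")
    case True
    then have "y = 0" using y by simp
    then show ?thesis using M_ge1[of j] kappa_nonneg[of 1] by (simp add: kappa_norm_def)
  next
    case False
    then show ?thesis using a by (simp add: kappa_norm_def)
  qed
qed

lemma phi_bdd: "bdd_above ((\<lambda>y. real j * y - kn (exp y)) ` {0..})"
  using phi_term_le by (intro bdd_aboveI2) auto

lemma phi_ge: "0 \<le> y \<Longrightarrow> real j * y - kn (exp y) \<le> phi_star kn (real j)"
  unfolding phi_star_def using phi_bdd by (intro cSUP_upper) auto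

lemma K_ge1: "1 \<le> K_seq M j"
  using phi_ge[of 0 j] unfolding K_seq_def by (simp add: kappa_norm_def)

lemma K_pos: "0 < K_seq M j" unfolding K_seq_def by simp

lemma K_lc: "K_seq M j \<le> exp (kap 1) * lc_minorant L j"
proof -
  have "phi_star kn (real j) \<le> kap 1 + ln (lc_minorant L j)"
    unfolding phi_star_def
  proof (rule cSUP_least)
    fix y :: real assume "y \<in> {0..}"
    then have y: "0 \<le> y" by simp
    have t: "exp y > 0" "1 \<le> exp y" using y by auto
    have "real j * y - kn (exp y) \<le> real j * y - omegaM L (exp y) + kap 1"
      using kn_ge[OF t(2)] by simp
    also have "real j * y - omegaM L (exp y) = ln (exp y ^ j * exp (- omegaM L (exp y)))"
      by (simp add: ln_mult_pos ln_realpow)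
    also have "\<dots> \<le> ln (lc_minorant L j)"
      using lc_ge[of "exp y" j] lc_pos[of j] by simp
    finally show "real j * y - kn (exp y) \<le> kap 1 + ln (lc_minorant L j)" by simp
  qed simp
  then have "K_seq M j \<le> exp (kap 1 + ln (lc_minorant L j))" unfolding K_seq_def by simp
  also have "\<dots> = exp (kap 1) * lc_minorant L j" using lc_pos[of j] by (simp add: exp_add)
  finally show ?thesis .
qed

theorem part2: "seq_preceq (K_seq M) (lc_minorant L)"
proof (rule seq_preceqI[where A=1 and E="exp (kap 1)"])
  show "1 \<le> exp (kap 1)" using kappa_nonneg[of 1] by simp
  fix k :: nat assume "1 \<le> k"
  show "0 < lc_minorant L k \<and> K_seq M k \<le> 1 ^ k * exp (kap 1) * lc_minorant L k"
    using lc_pos K_lc by simp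
qed simp

end

context nqs
begin

definition D0 :: real where "D0 = max 1 (tau M 1)"

lemma tau_eq: "tau M k = real k / q k + T k"
  unfolding tau_def T_def by simp

lemma tau_pos: "0 < tau M k"
  unfolding tau_eq using T_pos[of k] q_pos[of k] by (simp add: add_nonneg_pos)

lemma tau_div_mono: assumes "1 \<le> i" "i \<le> j" shows "tau M j / j \<le> tau M i / i"
proof -
  have e: "tau M k / k = 1 / q k + T k / k" if "1 \<le> k" for k
    using that q_pos[of k] unfolding tau_eq by (simp add: field_simps)
  have "1 / q j \<le> 1 / q i" using q_mono[OF assms(2)] q_pos[of i] by (simp add: frac_le)
  moreover have "T j / j \<le> T i / i"
  proof -
    have "T j / j \<le> T i / j" using T_mono[OF assms(2)] assms by (simp add: divide_right_mono)
    also have "\<dots> \<le> T i / i" using T_pos[of i] assms by (intro divide_left_mono) auto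
    finally show ?thesis .
  qed
  ultimately show ?thesis using e assms by simp
qed

lemma sigma_eq: "1 \<le> j \<Longrightarrow> sigma M j = tau M 1 / (tau M j / j)"
  unfolding sigma_def by simp

lemma sigma_mono: assumes "1 \<le> i" "i \<le> j" shows "sigma M i \<le> sigma M j"
proof -
  have p2: "0 < tau M j / j" using tau_pos[of j] assms by simp
  have p1: "0 < tau M i / i" using tau_pos[of i] assms by simp
  show ?thesis unfolding sigma_eq[OF assms(1)] sigma_eq[OF order_trans[OF assms]]
    by (rule divide_left_mono[OF tau_div_mono[OF assms] _ mult_pos_pos[OF p1 p2]]) (use tau_pos[of 1] in simp)
qed

lemma sigma_pos: "0 < sigma M j"
  unfolding sigma_def using tau_pos[of 1] tau_pos[of j] by simp

lemma sigma_le: "sigma M j \<le> D0 * q j"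
proof (cases "j = 0")
  case True then show ?thesis by (simp add: sigma_def D0_def)
next
  case False
  have "real j / q j \<le> tau M j" unfolding tau_eq using T_pos[of j] by simp
  then have "real j / tau M j \<le> q j" using tau_pos[of j] q_pos[of j] by (simp add: field_simps)
  then have "sigma M j \<le> tau M 1 * q j"
    using False tau_pos[of 1] unfolding sigma_def by (simp add: mult_left_mono times_divide_eq_right[symmetric] del: times_divide_eq_right)
  also have "\<dots> \<le> D0 * q j" using q_pos[of j] by (intro mult_right_mono) (auto simp: D0_def)
  finally show ?thesis .
qed

lemma M_prod2: "M k = (\<Prod>j\<le>k. q j)"
  by (induction k) (simp_all add: MS)

lemma S_bound: assumes k: "1 \<le> k"
  shows "\<exists>t>0. S_seq M k \<le> D0 ^ (k + 1) * exp (3 * real k) * t ^ k * exp (- G t)"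
proof -
  define t where "t = real k / tau M k"
  have t: "t > 0" unfolding t_def using k tau_pos[of k] by simp
  have tq: "t < q k"
  proof -
    have "real k < q k * tau M k" unfolding tau_eq using q_pos[of k] T_pos[of k]
      by (simp add: distrib_left)
    then show ?thesis unfolding t_def using tau_pos[of k] by (simp add: divide_less_eq mult.commute)
  qed
  define m where "m = Gam t"
  have mk: "m < k"
  proof (rule ccontr)
    assume "\<not> m < k"
    then have "q k \<le> t" using Gam2[of k t] k unfolding m_def by simp
    then show False using tq by simp
  qed
  have D01: "1 \<le> D0" "tau M 1 \<le> D0" by (auto simp: D0_def)
  have sk: "sigma M k = tau M 1 * t" unfolding sigma_def t_def using k by simp
  have ind: "S_seq M k' \<le> D0 ^ (m + 1) * M m * (tau M 1 * t) ^ (k' - m)" if "m \<le> k'" "k' \<le> k" for k'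
    using that
  proof (induction k' rule: dec_induct)
    case base
    have "S_seq M m \<le> (\<Prod>j\<le>m. D0 * q j)" unfolding S_seq_def
      by (intro prod_mono) (use sigma_pos sigma_le less_imp_le in auto)
    also have "\<dots> = D0 ^ (m + 1) * M m" by (simp add: prod.distrib M_prod2[of m])
    finally show ?case by simp
  next
    case (step n)
    have "sigma M (Suc n) \<le> sigma M k" using step by (intro sigma_mono) auto
    then have s1: "sigma M (Suc n) \<le> tau M 1 * t" using sk by simp
    have e1: "S_seq M (Suc n) = S_seq M n * sigma M (Suc n)" unfolding S_seq_def by simp
    have nn: "0 \<le> D0 ^ (m + 1) * M m * (tau M 1 * t) ^ (n - m)"
      using D01 M_pos[of m] tau_pos[of 1] t by simp
    have Sn: "0 \<le> S_seq M n" unfolding S_seq_def by (intro prod_nonneg) (simp add: less_imp_le[OF sigma_pos])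
    have i2: "S_seq M n * sigma M (Suc n) \<le> (D0 ^ (m + 1) * M m * (tau M 1 * t) ^ (n - m)) * (tau M 1 * t)"
      using step s1 sigma_pos[of "Suc n"] nn Sn by (intro mult_mono) auto
    have e3: "(D0 ^ (m + 1) * M m * (tau M 1 * t) ^ (n - m)) * (tau M 1 * t) = D0 ^ (m + 1) * M m * (tau M 1 * t) ^ (Suc n - m)"
      using step by (simp add: Suc_diff_le)
    show ?case unfolding e1 e3[symmetric] by (rule i2)
  qed
  have "S_seq M k \<le> D0 ^ (m + 1) * M m * (tau M 1 * t) ^ (k - m)" using ind mk by simp
  also have "\<dots> \<le> D0 ^ (m + 1) * M m * (D0 * t) ^ (k - m)"
    using D01 t tau_pos[of 1] M_pos[of m]
    by (intro mult_left_mono power_mono mult_right_mono) auto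
  also have "\<dots> = D0 ^ (k + 1) * M m * t ^ (k - m)"
    using mk by (simp add: power_mult_distrib power_add[symmetric])
  finally have Sb: "S_seq M k \<le> D0 ^ (k + 1) * M m * t ^ (k - m)" .
  have tT: "t * T (Suc m) \<le> 2 * real k"
  proof -
    have sp: "T (Suc m) = (\<Sum>l<k - Suc m. 1 / q (l + Suc m)) + T k"
      using T_split[of "Suc m" "k - Suc m"] mk by simp
    have "t * (\<Sum>l<k - Suc m. 1 / q (l + Suc m)) \<le> (\<Sum>l<k - Suc m. 1)"
      unfolding sum_distrib_left
    proof (rule sum_mono)
      fix l
      have "t < q (Suc m)" using Gam1[of t] unfolding m_def .
      also have "q (Suc m) \<le> q (l + Suc m)" by (rule q_mono) simp
      finally show "t * (1 / q (l + Suc m)) \<le> 1" using q_pos[of "l + Suc m"] by simp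
    qed
    also have "\<dots> \<le> real k" by simp
    finally have a: "t * (\<Sum>l<k - Suc m. 1 / q (l + Suc m)) \<le> real k" .
    have "t * T k \<le> t * tau M k" using t q_pos[of k] unfolding tau_eq by (intro mult_left_mono) auto
    also have "\<dots> = real k" unfolding t_def using tau_pos[of k] by simp
    finally have b: "t * T k \<le> real k" .
    show ?thesis unfolding sp distrib_left using a b by simp
  qed
  have Gb: "G t \<le> Plog t m + 3 * real k"
    using G_formula[OF t] tT mk unfolding m_def[symmetric] by simp
  have eP: "exp (Plog t m) = t ^ m / M m"
    using ln_ratio[OF t, of m] t M_pos[of m] by (metis M0 exp_ln mult_1_right zero_less_divide_iff zero_less_power)
  have "D0 ^ (k + 1) * M m * t ^ (k - m) = D0 ^ (k + 1) * exp (3 * real k) * t ^ k * exp (- (Plog t m + 3 * real k))"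
    using t M_pos[of m] mk eP by (simp add: exp_diff exp_minus field_simps power_diff exp_add)
  also have "\<dots> \<le> D0 ^ (k + 1) * exp (3 * real k) * t ^ k * exp (- G t)"
    using Gb t D01 by (intro mult_left_mono) auto
  finally show ?thesis using Sb t by (intro exI[of _ t]) simp
qed

end

lemma om_shift:
  assumes a: "nqs Ma" and b: "nqs Mb" and C: "1 \<le> C"
    and md: "\<And>k. Ma (k + 2) \<le> C ^ (k + 2) * Mb k * Mb 2" and u: "u > 0"
  shows "omega_tilde Mb u \<le> omegaM Ma (C * u) + (ln 2 + ln (Mb 2))"
proof -
  interpret A: nqs Ma by (rule a)
  interpret B: nqs Mb by (rule b)
  have lb2: "0 \<le> ln (Mb 2)" using B.M_ge1[of 2] by simp
  have Cu: "C * u > 0" using C u by simp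
  show ?thesis
  proof (cases "u \<le> 1")
    case True
    have "u\<^sup>2 \<le> 1" using True u by (simp add: power_le_one)
    then have "ln (1 + u\<^sup>2) \<le> ln 2" by (subst ln_le_cancel_iff) (auto simp: add_pos_nonneg)
    then show ?thesis using B.omega_small[OF True] A.omega_nonneg[of "C * u"] lb2
      by (simp add: omega_tilde_def)
  next
    case False
    define m where "m = B.Gam u"
    have wb: "omegaM Mb u = ln (u ^ m * Mb 0 / Mb m)"
      using B.omega_eq[OF u] B.ln_ratio[OF u, of m] unfolding m_def by simp
    have "1 + u\<^sup>2 \<le> 2 * u\<^sup>2" using False by (simp add: power2_eq_square) (smt (verit) mult_le_cancel_right1)
    then have "ln (1 + u\<^sup>2) \<le> ln (2 * u\<^sup>2)" using u by simp
    also have "\<dots> = ln 2 + 2 * ln u" using u by (simp add: ln_mult_pos ln_realpow)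
    finally have l1: "ln (1 + u\<^sup>2) \<le> ln 2 + 2 * ln u" .
    have e1: "ln (u ^ m * Mb 0 / Mb m) + 2 * ln u = ln (u ^ (m + 2) / (Mb m * Mb 2)) + ln (Mb 2)"
      using u B.M_pos[of m] B.M_pos[of 2]
      by (simp add: ln_mult_pos ln_divide_pos ln_realpow power_add)
    have pos1: "0 < u ^ (m + 2) / (Mb m * Mb 2)" using u B.M_pos[of m] B.M_pos[of 2] by simp
    have "u ^ (m + 2) / (Mb m * Mb 2) = (C * u) ^ (m + 2) / (C ^ (m + 2) * Mb m * Mb 2)"
      using C by (simp add: power_mult_distrib)
    also have "\<dots> \<le> (C * u) ^ (m + 2) / Ma (m + 2)"
      by (rule frac_le) (use md[of m] A.M_pos[of "m + 2"] Cu in auto)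
    also have "\<dots> = (C * u) ^ (m + 2) * Ma 0 / Ma (m + 2)" by simp
    finally have "ln (u ^ (m + 2) / (Mb m * Mb 2)) \<le> ln ((C * u) ^ (m + 2) * Ma 0 / Ma (m + 2))"
      using pos1 by simp
    also have "\<dots> \<le> omegaM Ma (C * u)"
      using A.omega_ge[OF Cu, of "m + 2"] A.ln_ratio[OF Cu, of "m + 2"] by simp
    finally show ?thesis using l1 e1 wb by (simp add: omega_tilde_def)
  qed
qed

lemma kap_shift:
  assumes a: "nqs Ma" and b: "nqs Mb" and C: "1 \<le> C"
    and md: "\<And>k. Ma (k + 2) \<le> C ^ (k + 2) * Mb k * Mb 2" and s: "s > 0"
  shows "kappa (omega_tilde Mb) s \<le> nqs.G Ma (C * s) + (ln 2 + ln (Mb 2))"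
proof -
  interpret A: nqs Ma by (rule a)
  interpret B: nqs Mb by (rule b)
  let ?c = "ln 2 + ln (Mb 2)"
  have Cs: "C * s > 0" using C s by simp
  have h1: "((\<lambda>r. omega_tilde Mb (s * r) / r\<^sup>2) has_integral (B.G s + B.Ip s)) {1..}"
    by (rule B.kt_has[OF s])
  have h2: "((\<lambda>r. omegaM Ma (C * s * r) / r\<^sup>2 + ?c * (1 / r\<^sup>2)) has_integral (A.G (C * s) + ?c * 1)) {1..}"
    by (intro has_integral_add A.kappa_series Cs has_integral_mult_right inv_sq)
  have "B.G s + B.Ip s \<le> A.G (C * s) + ?c * 1"
  proof (rule has_integral_le[OF h1 h2])
    fix r :: real assume "r \<in> {1..}"
    then have r: "r \<ge> 1" by simp
    have "omega_tilde Mb (s * r) \<le> omegaM Ma (C * (s * r)) + ?c"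
      using s r by (intro om_shift[OF a b C md]) simp
    then have "omega_tilde Mb (s * r) / r\<^sup>2 \<le> (omegaM Ma (C * s * r) + ?c) / r\<^sup>2"
      using r by (intro divide_right_mono) (auto simp: mult.assoc)
    then show "omega_tilde Mb (s * r) / r\<^sup>2 \<le> omegaM Ma (C * s * r) / r\<^sup>2 + ?c * (1 / r\<^sup>2)"
      by (simp add: add_divide_distrib)
  qed
  then show ?thesis using B.kappa_eq[OF s] by simp
qed

lemma part1:
  assumes a: "nqs Ma" and b: "nqs Mb" and C: "1 \<le> C"
    and md: "\<And>k. Ma (k + 2) \<le> C ^ (k + 2) * Mb k * Mb 2"
  shows "seq_preceq (S_seq Ma) (K_seq Mb)"
proof -
  interpret A: nqs Ma by (rule a)
  interpret B: nqs Mb by (rule b)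
  define c where "c = ln 2 + ln (Mb 2)"
  have c0: "0 \<le> c" unfolding c_def using B.M_ge1[of 2] by simp
  have D1: "1 \<le> A.D0" by (simp add: A.D0_def)
  show ?thesis
  proof (rule seq_preceqI[where A="A.D0 * exp 3 * C" and E="A.D0 * exp c"])
    show "0 \<le> A.D0 * exp 3 * C" using D1 C by simp
    have "1 * 1 \<le> A.D0 * exp c" using D1 c0 by (intro mult_mono) auto
    then show "1 \<le> A.D0 * exp c" by simp
    fix k :: nat assume k: "1 \<le> k"
    obtain t where t: "t > 0"
      and St: "S_seq Ma k \<le> A.D0 ^ (k + 1) * exp (3 * real k) * t ^ k * exp (- A.G t)"
      using A.S_bound[OF k] by blast
    have Bk: "A.D0 ^ (k + 1) * exp (3 * real k) = (A.D0 * exp 3) ^ k * A.D0"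
      by (simp add: power_mult_distrib exp_of_nat_mult[symmetric] mult.commute mult.left_commute)
    have Kp: "1 \<le> K_seq Mb k" by (rule B.K_ge1)
    have key: "t ^ k * exp (- A.G t) \<le> C ^ k * exp c * K_seq Mb k"
    proof (cases "C \<le> t")
      case True
      define s where "s = t / C"
      have s1: "1 \<le> s" unfolding s_def using True C by simp
      have s0: "0 < s" using s1 by simp
      define y where "y = ln s"
      have y0: "0 \<le> y" unfolding y_def using s1 by simp
      have ey: "exp y = s" unfolding y_def using s0 by simp
      have ph: "real k * y - B.kn s \<le> phi_star B.kn (real k)"
        using B.phi_ge[OF y0, of k] ey by simp
      have "B.kn s \<le> B.kap s" by (rule B.kn_le[OF s1])
      also have "\<dots> \<le> A.G (C * s) + c" unfolding c_def by (rule kap_shift[OF a b C md s0])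
      also have "C * s = t" unfolding s_def using C by simp
      finally have kn: "B.kn s \<le> A.G t + c" .
      have "exp (real k * y - A.G t - c) \<le> K_seq Mb k"
        unfolding K_seq_def using ph kn by simp
      moreover have "exp (real k * y - A.G t - c) = s ^ k * exp (- A.G t) / exp c"
        by (simp add: exp_diff exp_minus exp_add exp_of_nat_mult[symmetric] ey[symmetric] field_simps)
      ultimately have "s ^ k * exp (- A.G t) \<le> exp c * K_seq Mb k" by (simp add: divide_le_eq mult.commute)
      then have "C ^ k * (s ^ k * exp (- A.G t)) \<le> C ^ k * (exp c * K_seq Mb k)"
        using C by (intro mult_left_mono) auto
      moreover have "t ^ k = C ^ k * s ^ k" unfolding s_def using C by (simp add: power_divide)
      ultimately show ?thesis by (simp add: mult.assoc)
    next
      case False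
      have "t ^ k \<le> C ^ k" using False t by (intro power_mono) auto
      moreover have "exp (- A.G t) \<le> 1" using A.G_nonneg[OF t] by simp
      ultimately have "t ^ k * exp (- A.G t) \<le> C ^ k * 1"
        using t C by (intro mult_mono) auto
      also have "\<dots> \<le> C ^ k * (exp c * K_seq Mb k)"
      proof -
        have "1 * 1 \<le> exp c * K_seq Mb k" using c0 Kp by (intro mult_mono) auto
        then show ?thesis using C by (intro mult_left_mono) auto
      qed
      finally show ?thesis by (simp add: mult.assoc)
    qed
    have St': "S_seq Ma k \<le> (A.D0 ^ (k + 1) * exp (3 * real k)) * (t ^ k * exp (- A.G t))"
      using St by (simp only: mult.assoc)
    have "S_seq Ma k \<le> (A.D0 * exp 3) ^ k * A.D0 * (t ^ k * exp (- A.G t))"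
      using St' unfolding Bk .
    also have "\<dots> \<le> (A.D0 * exp 3) ^ k * A.D0 * (C ^ k * exp c * K_seq Mb k)"
      using key D1 by (intro mult_left_mono) auto
    also have "\<dots> = (A.D0 * exp 3 * C) ^ k * (A.D0 * exp c) * K_seq Mb k"
      by (simp add: power_mult_distrib)
    finally show "0 < K_seq Mb k \<and> S_seq Ma k \<le> (A.D0 * exp 3 * C) ^ k * (A.D0 * exp c) * K_seq Mb k"
      using B.K_pos by simp
  qed
qed

theorem theorem4p5:
  fixes Mf :: "real \<Rightarrow> nat \<Rightarrow> real"
  assumes "weight_matrix Mf" and "nq_matrix Mf" and "R_moderate Mf"
  shows "fam_preceq (\<lambda>\<alpha>. S_seq (Mf \<alpha>)) (\<lambda>\<alpha>. K_seq (Mf \<alpha>))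
       \<and> fam_preceq (\<lambda>\<alpha>. K_seq (Mf \<alpha>)) (\<lambda>\<alpha>. lc_minorant (L_seq (Mf \<alpha>)))
       \<and> fam_preceq (\<lambda>\<alpha>. lc_minorant (L_seq (Mf \<alpha>))) (\<lambda>\<alpha>. L_seq (Mf \<alpha>))"
proof -
  have nq: "nqs (Mf \<alpha>)" if "\<alpha> > 0" for \<alpha>
    using assms(2) that unfolding nq_matrix_def nqs_def by blast
  have p1: "fam_preceq (\<lambda>\<alpha>. S_seq (Mf \<alpha>)) (\<lambda>\<alpha>. K_seq (Mf \<alpha>))"
    unfolding fam_preceq_def
  proof (intro allI impI)
    fix \<alpha> :: real assume a: "\<alpha> > 0"
    obtain \<beta> C where b: "\<beta> > 0" and C: "C \<ge> 1"
      and md: "\<And>j k. Mf \<alpha> (j + k) \<le> C ^ (j + k) * Mf \<beta> j * Mf \<beta> k"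
      using assms(3) a unfolding R_moderate_def by blast
    have "seq_preceq (S_seq (Mf \<alpha>)) (K_seq (Mf \<beta>))"
      by (rule part1[OF nq[OF a] nq[OF b] C md])
    then show "\<exists>\<beta>>0. seq_preceq (S_seq (Mf \<alpha>)) (K_seq (Mf \<beta>))" using b by blast
  qed
  have p2: "fam_preceq (\<lambda>\<alpha>. K_seq (Mf \<alpha>)) (\<lambda>\<alpha>. lc_minorant (L_seq (Mf \<alpha>)))"
    unfolding fam_preceq_def using nqs.part2 nq by blast
  have p3: "fam_preceq (\<lambda>\<alpha>. lc_minorant (L_seq (Mf \<alpha>))) (\<lambda>\<alpha>. L_seq (Mf \<alpha>))"
    unfolding fam_preceq_def using nqs.part3 nq by blast
  show ?thesis using p1 p2 p3 by blast
qed

end
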